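(* Let $A=[a_{ij}]$ be the adjacency matrix of a strongly connected, aperiodic directed graph on $\mathcal X=\{1,\ldots,n\}$, and let $N\ge1$ be such that all entries of $A^N$ are positive. Let $\lambda_A$, $u,v>0$ with $A^Tu=\lambda_Au$, $Av=\lambda_Av$, $\sum_iu_iv_i=1$, $\nu_{RB}(i)=u_iv_i$, $r_{ij}=\frac{v_j}{\lambda_Av_i}a_{ij}$, and $\mathfrak M_{\rm RB}(x_0,\ldots,x_N)=\nu_{RB}(x_0)r_{x_0x_1}\cdots r_{x_{N-1}x_N}$. Let $\mu_0$ be a measure on $\mathcal X$ with $\mu_0(x)>0$ for all $x$ and $\mathfrak M(x_0,\ldots,x_N)=\mu_0(x_0)a_{x_0x_1}\cdots a_{x_{N-1}x_N}$. Let $\mathcal P(\delta_1,\delta_n)$ be the set of probability distributions on $\mathcal X^{N+1}$ with marginal at time $0$ equal to the point mass $\delta_1$ at node $1$ and marginal at time $N$ equal to the point mass $\delta_n$ at node $n$. Then the minimizer $\mathfrak M^*[\delta_1,\delta_n]$ of $\mathbb D(P\|\mathfrak M_{\rm RB})$ over $P\in\mathcal P(\delta_1,\delta_n)$ also solves the problem $\min\{\mathbb D(P\|\mathfrak M)\mid P\in\mathcal P(\delta_1,\delta_n)\}$.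
   Context: Relative entropy of a probability distribution $P$ with respect to a nonnegative measure $Q$ on a finite set: $\mathbb D(P\|Q)=\sum_x P(x)\log\frac{P(x)}{Q(x)}$ if $\mathrm{supp}(P)\subseteq\mathrm{supp}(Q)$ (with $0\log0=0$), and $+\infty$ otherwise. *)

theory Defs
  imports "HOL-Analysis.Analysis"
begin

text \<open>Nodes are X = {1..n}; matrices are functions nat => nat => real restricted to X.\<close>

definition nodes :: "nat \<Rightarrow> nat set" where
  "nodes n = {1..n}"

fun mpow :: "nat \<Rightarrow> (nat \<Rightarrow> nat \<Rightarrow> real) \<Rightarrow> nat \<Rightarrow> nat \<Rightarrow> nat \<Rightarrow> real" where
  "mpow n A 0 i j = (if i = j then 1 else 0)"
| "mpow n A (Suc k) i j = (\<Sum>l\<in>nodes n. mpow n A k i l * A l j)"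

definition adjacency_matrix :: "nat \<Rightarrow> (nat \<Rightarrow> nat \<Rightarrow> real) \<Rightarrow> bool" where
  "adjacency_matrix n A \<longleftrightarrow> (\<forall>i\<in>nodes n. \<forall>j\<in>nodes n. A i j = 0 \<or> A i j = 1)"

definition strongly_connected :: "nat \<Rightarrow> (nat \<Rightarrow> nat \<Rightarrow> real) \<Rightarrow> bool" where
  "strongly_connected n A \<longleftrightarrow>
     (\<forall>i\<in>nodes n. \<forall>j\<in>nodes n. \<exists>k\<ge>1. mpow n A k i j > 0)"

definition aperiodic :: "nat \<Rightarrow> (nat \<Rightarrow> nat \<Rightarrow> real) \<Rightarrow> bool" where
  "aperiodic n A \<longleftrightarrow> Gcd {k. k \<ge> 1 \<and> (\<exists>i\<in>nodes n. mpow n A k i i > 0)} = 1"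

definition paths :: "nat \<Rightarrow> nat \<Rightarrow> nat list set" where
  "paths n N = {xs. length xs = Suc N \<and> set xs \<subseteq> nodes n}"

definition rel_entropy :: "'a set \<Rightarrow> ('a \<Rightarrow> real) \<Rightarrow> ('a \<Rightarrow> real) \<Rightarrow> ereal" where
  "rel_entropy S P Q =
     (if \<forall>x\<in>S. P x \<noteq> 0 \<longrightarrow> Q x \<noteq> 0
      then ereal (\<Sum>x\<in>S. if P x = 0 then 0 else P x * ln (P x / Q x))
      else \<infinity>)"

definition bridge_set :: "nat \<Rightarrow> nat \<Rightarrow> nat \<Rightarrow> nat \<Rightarrow> (nat list \<Rightarrow> real) set" where
  "bridge_set n N a b = {P.
     (\<forall>xs\<in>paths n N. P xs \<ge> 0) \<and> (\<Sum>xs\<in>paths n N. P xs) = 1 \<and>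
     (\<forall>i\<in>nodes n. (\<Sum>xs\<in>{xs\<in>paths n N. xs ! 0 = i}. P xs) = (if i = a then 1 else 0)) \<and>
     (\<forall>i\<in>nodes n. (\<Sum>xs\<in>{xs\<in>paths n N. xs ! N = i}. P xs) = (if i = b then 1 else 0))}"

definition is_minimizer :: "nat \<Rightarrow> nat \<Rightarrow> (nat list \<Rightarrow> real) set \<Rightarrow> (nat list \<Rightarrow> real)
    \<Rightarrow> (nat list \<Rightarrow> real) \<Rightarrow> bool" where
  "is_minimizer n N C Q P \<longleftrightarrow> P \<in> C \<and>
     (\<forall>P'\<in>C. rel_entropy (paths n N) P Q \<le> rel_entropy (paths n N) P' Q)"

definition path_measure :: "nat \<Rightarrow> (nat \<Rightarrow> real) \<Rightarrow> (nat \<Rightarrow> nat \<Rightarrow> real) \<Rightarrow> nat list \<Rightarrow> real" where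
  "path_measure N mu w xs = mu (xs ! 0) * (\<Prod>k<N. w (xs ! k) (xs ! Suc k))"

end

theory Submission
  imports Defs
begin

lemma gibbs_lower:
  fixes S T :: "'a set" and P Q :: "'a \<Rightarrow> real"
  assumes fin: "finite S" and P0: "\<forall>x\<in>S. P x \<ge> 0" and P1: "(\<Sum>x\<in>S. P x) = 1"
    and Q0: "\<forall>x\<in>S. Q x \<ge> 0" and supp: "\<forall>x\<in>S. P x \<noteq> 0 \<longrightarrow> Q x \<noteq> 0"
    and PT: "\<forall>x\<in>S. P x \<noteq> 0 \<longrightarrow> x \<in> T" and TS: "T \<subseteq> S"
    and Z: "(\<Sum>x\<in>T. Q x) = Z" and Zp: "Z > 0"
  shows "(\<Sum>x\<in>S. if P x = 0 then 0 else P x * ln (P x / Q x)) \<ge> - ln Z"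
proof -
  have pt: "(if P x = 0 then 0 else P x * ln (P x / Q x)) \<ge>
        (if P x = 0 then 0 else - Q x / Z) + P x - P x * ln Z" if x: "x \<in> S" for x
  proof (cases "P x = 0")
    case True then show ?thesis by simp
  next
    case False
    have p: "P x > 0" using P0 x False by force
    have q: "Q x > 0" using Q0 supp x False by force
    have "ln (Q x / (P x * Z)) \<le> Q x / (P x * Z) - 1"
      by (rule ln_le_minus_one) (use p q Zp in simp)
    moreover have "ln (Q x / (P x * Z)) = ln (Q x) - ln (P x) - ln Z"
      using p q Zp by (simp add: ln_div ln_mult)
    moreover have "ln (P x / Q x) = ln (P x) - ln (Q x)" using p q by (simp add: ln_div)
    ultimately have "ln (P x / Q x) \<ge> - (Q x / (P x * Z)) + 1 - ln Z" by linarith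
    hence "P x * ln (P x / Q x) \<ge> P x * (- (Q x / (P x * Z)) + 1 - ln Z)"
      using p by (simp add: mult_left_mono)
    also have "P x * (- (Q x / (P x * Z)) + 1 - ln Z) = - Q x / Z + P x - P x * ln Z"
      using p Zp by (simp add: field_simps)
    finally show ?thesis using False by simp
  qed
  have "(\<Sum>x\<in>S. if P x = 0 then 0 else P x * ln (P x / Q x)) \<ge>
        (\<Sum>x\<in>S. (if P x = 0 then 0 else - Q x / Z) + P x - P x * ln Z)"
    by (rule sum_mono) (use pt in auto)
  also have "(\<Sum>x\<in>S. (if P x = 0 then 0 else - Q x / Z) + P x - P x * ln Z)
      = - (\<Sum>x\<in>S. if P x = 0 then 0 else Q x) / Z + 1 - ln Z"
  proof -
    have "(\<Sum>x\<in>S. (if P x = 0 then 0 else - Q x / Z)) = (\<Sum>x\<in>S. - ((if P x = 0 then 0 else Q x) / Z))"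
      by (rule sum.cong) auto
    also have "\<dots> = - (\<Sum>x\<in>S. if P x = 0 then 0 else Q x) / Z"
      by (simp add: sum_negf sum_divide_distrib[symmetric])
    finally have e: "(\<Sum>x\<in>S. (if P x = 0 then 0 else - Q x / Z)) = - (\<Sum>x\<in>S. if P x = 0 then 0 else Q x) / Z" .
    have "(\<Sum>x\<in>S. (if P x = 0 then 0 else - Q x / Z) + P x - P x * ln Z) =
      (\<Sum>x\<in>S. (if P x = 0 then 0 else - Q x / Z)) + (\<Sum>x\<in>S. P x) - (\<Sum>x\<in>S. P x) * ln Z"
      by (simp add: sum.distrib sum_subtractf sum_distrib_right)
    thus ?thesis using e P1 by simp
  qed
  also have "(\<Sum>x\<in>S. if P x = 0 then 0 else Q x) \<le> (\<Sum>x\<in>T. Q x)"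
  proof -
    have "(\<Sum>x\<in>S. if P x = 0 then 0 else Q x) = (\<Sum>x\<in>T. if P x = 0 then 0 else Q x)"
      by (rule sum.mono_neutral_right) (use fin TS PT in auto)
    also have "\<dots> \<le> (\<Sum>x\<in>T. Q x)" by (rule sum_mono) (use Q0 TS in auto)
    finally show ?thesis .
  qed
  hence "- (\<Sum>x\<in>S. if P x = 0 then 0 else Q x) / Z + 1 - ln Z \<ge> - ln Z"
    using Z Zp by (simp add: field_simps)
  finally show ?thesis .
qed

lemma rel_entropy_scale:
  fixes S :: "'a set" and P Q1 Q2 :: "'a \<Rightarrow> real"
  assumes P0: "\<forall>x\<in>S. P x \<ge> 0" and P1: "(\<Sum>x\<in>S. P x) = 1"
    and Q0: "\<forall>x\<in>S. Q1 x \<ge> 0" and c: "c > 0"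
    and eq: "\<forall>x\<in>S. P x \<noteq> 0 \<longrightarrow> Q2 x = c * Q1 x"
  shows "rel_entropy S P Q2 = rel_entropy S P Q1 - ereal (ln c)"
proof (cases "\<forall>x\<in>S. P x \<noteq> 0 \<longrightarrow> Q1 x \<noteq> 0")
  case True
  have T2: "\<forall>x\<in>S. P x \<noteq> 0 \<longrightarrow> Q2 x \<noteq> 0" using True eq c by auto
  have "(\<Sum>x\<in>S. if P x = 0 then 0 else P x * ln (P x / Q2 x)) =
        (\<Sum>x\<in>S. (if P x = 0 then 0 else P x * ln (P x / Q1 x)) - P x * ln c)"
  proof (rule sum.cong)
    fix x assume x: "x \<in> S"
    show "(if P x = 0 then 0 else P x * ln (P x / Q2 x)) =
        (if P x = 0 then 0 else P x * ln (P x / Q1 x)) - P x * ln c"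
    proof (cases "P x = 0")
      case False
      have p: "P x > 0" using P0 x False by force
      have q: "Q1 x > 0" using Q0 True x False by force
      have "ln (P x / Q2 x) = ln (P x / Q1 x) - ln c"
        using eq x False p q c by (simp add: ln_div ln_mult)
      hence "P x * ln (P x / Q2 x) = P x * ln (P x / Q1 x) - P x * ln c"
        by (simp add: right_diff_distrib)
      thus ?thesis using False by simp
    qed simp
  qed simp
  also have "\<dots> = (\<Sum>x\<in>S. if P x = 0 then 0 else P x * ln (P x / Q1 x)) - ln c"
    by (simp add: sum_subtractf sum_distrib_right[symmetric] P1)
  finally show ?thesis using True T2 unfolding rel_entropy_def by simp
next
  case False
  have F2: "\<not> (\<forall>x\<in>S. P x \<noteq> 0 \<longrightarrow> Q2 x \<noteq> 0)" using False eq by auto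
  show ?thesis using False F2 unfolding rel_entropy_def by simp
qed

lemma prod_telescope_div:
  fixes f :: "nat \<Rightarrow> real"
  assumes "\<forall>k\<le>N. f k \<noteq> 0"
  shows "(\<Prod>k<N. f (Suc k) / f k) = f N / f 0"
  using assms by (induction N) auto

lemma walk_exists:
  assumes adj: "adjacency_matrix n A" and i: "i \<in> nodes n"
  shows "j \<in> nodes n \<Longrightarrow> mpow n A k i j > 0 \<Longrightarrow> \<exists>xs. length xs = Suc k \<and> set xs \<subseteq> nodes n \<and> xs!0 = i \<and> xs!k = j \<and>
           (\<forall>m<k. A (xs!m) (xs!Suc m) = 1)"
proof (induction k arbitrary: j)
  case 0
  hence "j = i" by (auto split: if_splits)
  thus ?case using i by (intro exI[of _ "[i]"]) auto
next
  case (Suc k)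
  have "0 < (\<Sum>l\<in>nodes n. mpow n A k i l * A l j)" using Suc.prems by simp
  then obtain l where l: "l \<in> nodes n" and t: "mpow n A k i l * A l j > 0"
    by (metis (no_types, lifting) linorder_not_less sum_nonpos)
  have a: "A l j = 1" using adj l Suc.prems(1) t unfolding adjacency_matrix_def by force
  hence "mpow n A k i l > 0" using t by simp
  then obtain xs where xs: "length xs = Suc k" "set xs \<subseteq> nodes n" "xs!0 = i" "xs!k = l"
      "\<forall>m<k. A (xs!m) (xs!Suc m) = 1" using Suc.IH l by blast
  show ?case
  proof (intro exI[of _ "xs @ [j]"] conjI allI impI)
    fix m assume m: "m < Suc k"
    show "A ((xs @ [j]) ! m) ((xs @ [j]) ! Suc m) = 1"
    proof (cases "m < k")
      case True thus ?thesis using xs by (simp add: nth_append)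
    next
      case False hence "m = k" using m by simp
      thus ?thesis using xs a by (simp add: nth_append)
    qed
  qed (use xs Suc.prems in \<open>auto simp: nth_append\<close>)
qed


theorem proposition5p2:
  fixes n N :: nat and A :: "nat \<Rightarrow> nat \<Rightarrow> real" and lam :: real
    and u v mu0 :: "nat \<Rightarrow> real"
  assumes "n \<ge> 1"
    and "adjacency_matrix n A" and "strongly_connected n A" and "aperiodic n A"
    and "N \<ge> 1" and "\<forall>i\<in>nodes n. \<forall>j\<in>nodes n. mpow n A N i j > 0"
    and "\<forall>i\<in>nodes n. u i > 0" and "\<forall>i\<in>nodes n. v i > 0"
    and "\<forall>i\<in>nodes n. (\<Sum>j\<in>nodes n. A j i * u j) = lam * u i"
    and "\<forall>i\<in>nodes n. (\<Sum>j\<in>nodes n. A i j * v j) = lam * v i"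
    and "(\<Sum>i\<in>nodes n. u i * v i) = 1"
    and "\<forall>i\<in>nodes n. mu0 i > 0"
  shows "let nuRB = (\<lambda>i. u i * v i);
             r = (\<lambda>i j. v j / (lam * v i) * A i j);
             MRB = path_measure N nuRB r;
             M = path_measure N mu0 A;
             C = bridge_set n N 1 n
         in (\<exists>P. is_minimizer n N C MRB P) \<and>
            (\<forall>P. is_minimizer n N C MRB P \<longrightarrow> is_minimizer n N C M P)"
proof -
  note adj = assms(2) and posN = assms(6) and upos = assms(7) and vpos = assms(8)
    and ueig = assms(9) and mupos = assms(12)
  define S where "S = paths n N"
  define T where "T = {xs\<in>S. xs!0 = 1 \<and> xs!N = n}"
  define MRB where "MRB = path_measure N (\<lambda>i. u i * v i) (\<lambda>i j. v j / (lam * v i) * A i j)"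
  define M where "M = path_measure N mu0 A"
  define C where "C = bridge_set n N 1 n"
  have n1: "1 \<in> nodes n" and nn: "n \<in> nodes n" using assms(1) by (auto simp: nodes_def)
  have finS: "finite S" unfolding S_def paths_def
    using finite_lists_length_eq[of "nodes n" "Suc N"] by (simp add: nodes_def conj_commute)
  have TS: "T \<subseteq> S" unfolding T_def by auto
  have finT: "finite T" using finS TS finite_subset by blast
  have nodemem: "xs!k \<in> nodes n" if "xs \<in> S" "k \<le> N" for xs k
  proof -
    have l: "length xs = Suc N" and st: "set xs \<subseteq> nodes n" using that(1) unfolding S_def paths_def by auto
    have "xs!k \<in> set xs" using l that(2) by (intro nth_mem) simp
    thus ?thesis using st by blast
  qed
  have A0: "A i j \<ge> 0" if "i \<in> nodes n" "j \<in> nodes n" for i j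
    using adj that unfolding adjacency_matrix_def by force
  have M0: "\<forall>x\<in>S. M x \<ge> 0"
  proof
    fix x assume x: "x \<in> S"
    have "mu0 (x!0) \<ge> 0" using mupos nodemem[OF x] by (meson le0 less_imp_le)
    moreover have "(\<Prod>k<N. A (x!k) (x!Suc k)) \<ge> 0"
      by (rule prod_nonneg) (use A0 nodemem[OF x] in auto)
    ultimately show "M x \<ge> 0" unfolding M_def path_measure_def by simp
  qed
  define Z where "Z = (\<Sum>x\<in>T. M x)"
  have Zpos: "Z > 0"
  proof -
    obtain w where w: "length w = Suc N" "set w \<subseteq> nodes n" "w!0 = 1" "w!N = n"
      "\<forall>m<N. A (w!m) (w!Suc m) = 1"
      using walk_exists[OF adj n1 nn, of N] posN n1 nn by blast
    have wT: "w \<in> T" using w unfolding T_def S_def paths_def by auto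
    have "M w = mu0 1" unfolding M_def path_measure_def using w by simp
    hence "M w > 0" using mupos n1 by simp
    moreover have "M w \<le> Z" unfolding Z_def
      by (rule member_le_sum) (use wT M0 TS finT in auto)
    ultimately show ?thesis by simp
  qed
  have lampos: "lam > 0"
  proof -
    have "lam * u i \<ge> 0" if "i \<in> nodes n" for i
      using ueig that A0 upos by (metis (no_types, lifting) less_imp_le mult_nonneg_nonneg sum_nonneg)
    hence "lam * u 1 \<ge> 0" using n1 by blast
    moreover have "u 1 > 0" using upos n1 by blast
    ultimately have lam0: "lam \<ge> 0" by (auto simp: zero_le_mult_iff)
    show ?thesis
    proof (rule ccontr)
      assume "\<not> lam > 0"
      hence lz: "lam = 0" using lam0 by simp
      have "A 1 n = 0"
      proof -
        have "(\<Sum>j\<in>nodes n. A j n * u j) = 0" using ueig nn lz by simp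
        moreover have "finite (nodes n)" by (simp add: nodes_def)
        ultimately have "\<forall>j\<in>nodes n. A j n * u j = 0"
          using sum_nonneg_eq_0_iff[of "nodes n" "\<lambda>j. A j n * u j"] A0 upos nn
          by (meson less_imp_le mult_nonneg_nonneg)
        thus ?thesis using upos n1 by force
      qed
      have allz: "\<forall>i\<in>nodes n. \<forall>j\<in>nodes n. A i j = 0"
      proof (intro ballI)
        fix i j assume i: "i \<in> nodes n" and j: "j \<in> nodes n"
        have "(\<Sum>k\<in>nodes n. A k j * u k) = 0" using ueig j lz by simp
        hence "\<forall>k\<in>nodes n. A k j * u k = 0"
          using sum_nonneg_eq_0_iff[of "nodes n" "\<lambda>k. A k j * u k"] A0 upos j
          by (metis (no_types, lifting) finite_atLeastAtMost less_imp_le mult_nonneg_nonneg nodes_def)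
        thus "A i j = 0" using upos i by force
      qed
      obtain N' where N': "N = Suc N'" using assms(5) by (cases N) auto
      have "mpow n A N 1 n = 0" using allz nn unfolding N' by simp
      thus False using posN n1 nn by force
    qed
  qed
  define c where "c = u 1 * v n / (lam ^ N * mu0 1)"
  have cpos: "c > 0" unfolding c_def using upos vpos mupos n1 nn lampos by simp
  have MRB_eq: "MRB x = c * M x" if x: "x \<in> T" for x
  proof -
    have xS: "x \<in> S" and x0: "x!0 = 1" and xN: "x!N = n" using x unfolding T_def by auto
    have vnz: "\<forall>k\<le>N. v (x!k) \<noteq> 0" using vpos nodemem[OF xS] by force
    have "(\<Prod>k<N. v (x!Suc k) / (lam * v (x!k)) * A (x!k) (x!Suc k)) =
          (\<Prod>k<N. (v (x!Suc k) / v (x!k)) * (1 / lam) * A (x!k) (x!Suc k))"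
      by (rule prod.cong) auto
    also have "\<dots> = (\<Prod>k<N. v (x!Suc k) / v (x!k)) * (1/lam)^N * (\<Prod>k<N. A (x!k) (x!Suc k))"
      by (simp only: prod.distrib prod_constant card_lessThan)
    also have "\<dots> = v n / v 1 * (1/lam)^N * (\<Prod>k<N. A (x!k) (x!Suc k))"
      using prod_telescope_div[OF vnz] x0 xN by (simp only:)
    finally have e: "(\<Prod>k<N. v (x!Suc k) / (lam * v (x!k)) * A (x!k) (x!Suc k)) =
       v n / v 1 * (1/lam)^N * (\<Prod>k<N. A (x!k) (x!Suc k))" .
    have v1: "v 1 \<noteq> 0" and m1: "mu0 1 \<noteq> 0" using vpos mupos n1 by force+
    show ?thesis unfolding MRB_def M_def path_measure_def e c_def x0
      using v1 m1 lampos by (simp add: field_simps power_one_over)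
  qed
  have supp: "x \<in> T" if P: "P \<in> C" and x: "x \<in> S" and Px: "P x \<noteq> 0" for P x
  proof -
    have P0: "\<forall>xs\<in>S. P xs \<ge> 0" using P unfolding C_def bridge_set_def S_def by auto
    have x0: "x!0 \<in> nodes n" and xN: "x!N \<in> nodes n" using nodemem[OF x] by auto
    have m0: "(\<Sum>xs\<in>{xs\<in>S. xs ! 0 = x!0}. P xs) = (if x!0 = 1 then 1 else 0)"
      using P x0 unfolding C_def bridge_set_def S_def by auto
    have mN: "(\<Sum>xs\<in>{xs\<in>S. xs ! N = x!N}. P xs) = (if x!N = n then 1 else 0)"
      using P xN unfolding C_def bridge_set_def S_def by auto
    have "x!0 = 1"
    proof (rule ccontr)
      assume "x!0 \<noteq> 1"
      hence "(\<Sum>xs\<in>{xs\<in>S. xs ! 0 = x!0}. P xs) = 0" using m0 by simp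
      hence "\<forall>xs\<in>{xs\<in>S. xs ! 0 = x!0}. P xs = 0"
        using sum_nonneg_eq_0_iff[of "{xs\<in>S. xs ! 0 = x!0}" P] finS P0 by auto
      thus False using x Px by auto
    qed
    moreover have "x!N = n"
    proof (rule ccontr)
      assume "x!N \<noteq> n"
      hence "(\<Sum>xs\<in>{xs\<in>S. xs ! N = x!N}. P xs) = 0" using mN by simp
      hence "\<forall>xs\<in>{xs\<in>S. xs ! N = x!N}. P xs = 0"
        using sum_nonneg_eq_0_iff[of "{xs\<in>S. xs ! N = x!N}" P] finS P0 by auto
      thus False using x Px by auto
    qed
    ultimately show ?thesis unfolding T_def using x by auto
  qed
  have transfer: "rel_entropy S P MRB = rel_entropy S P M - ereal (ln c)" if P: "P \<in> C" for P
    by (rule rel_entropy_scale) (use P M0 cpos MRB_eq supp in \<open>auto simp: C_def bridge_set_def S_def\<close>)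
  have lower: "rel_entropy S P M \<ge> ereal (- ln Z)" if P: "P \<in> C" for P
  proof (cases "\<forall>x\<in>S. P x \<noteq> 0 \<longrightarrow> M x \<noteq> 0")
    case True
    have "(\<Sum>x\<in>S. if P x = 0 then 0 else P x * ln (P x / M x)) \<ge> - ln Z"
      by (rule gibbs_lower[OF finS _ _ M0 True _ TS Z_def[symmetric] Zpos])
        (use P supp in \<open>auto simp: C_def bridge_set_def S_def\<close>)
    thus ?thesis using True unfolding rel_entropy_def by simp
  qed (auto simp add: rel_entropy_def)
  define Ps where "Ps = (\<lambda>x. if x \<in> T then M x / Z else 0)"
  have sumPs: "(\<Sum>x\<in>B. Ps x) = (\<Sum>x\<in>B \<inter> T. M x) / Z" if "finite B" for B
    unfolding Ps_def using that by (simp add: sum.inter_restrict[symmetric] sum_divide_distrib if_distrib cong: if_cong)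
  have PsC: "Ps \<in> C"
    unfolding C_def bridge_set_def S_def[symmetric]
  proof (intro CollectI conjI ballI)
    fix xs assume "xs \<in> S" thus "Ps xs \<ge> 0" using M0 TS Zpos unfolding Ps_def by auto
  next
    show "(\<Sum>x\<in>S. Ps x) = 1" using sumPs[OF finS] TS Zpos Z_def by (simp add: Int_absorb1)
  next
    fix i assume i: "i \<in> nodes n"
    have "{xs\<in>S. xs!0 = i} \<inter> T = (if i = 1 then T else {})" unfolding T_def by auto
    thus "(\<Sum>xs\<in>{xs\<in>S. xs!0 = i}. Ps xs) = (if i = 1 then 1 else 0)"
      using sumPs[of "{xs\<in>S. xs!0 = i}"] finS Zpos Z_def by simp
  next
    fix i assume i: "i \<in> nodes n"
    have "{xs\<in>S. xs!N = i} \<inter> T = (if i = n then T else {})" unfolding T_def by auto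
    thus "(\<Sum>xs\<in>{xs\<in>S. xs!N = i}. Ps xs) = (if i = n then 1 else 0)"
      using sumPs[of "{xs\<in>S. xs!N = i}"] finS Zpos Z_def by simp
  qed
  have DPs: "rel_entropy S Ps M = ereal (- ln Z)"
  proof -
    have cond: "\<forall>x\<in>S. Ps x \<noteq> 0 \<longrightarrow> M x \<noteq> 0" unfolding Ps_def by auto
    have "(\<Sum>x\<in>S. if Ps x = 0 then 0 else Ps x * ln (Ps x / M x)) = (\<Sum>x\<in>S. - (Ps x * ln Z))"
    proof (rule sum.cong)
      fix x assume "x \<in> S"
      show "(if Ps x = 0 then 0 else Ps x * ln (Ps x / M x)) = - (Ps x * ln Z)"
      proof (cases "Ps x = 0")
        case False
        hence "x \<in> T" "M x \<noteq> 0" unfolding Ps_def by (auto split: if_splits)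
        hence "Ps x / M x = 1 / Z" unfolding Ps_def by simp
        thus ?thesis using False Zpos by (simp add: ln_div)
      qed simp
    qed simp
    also have "\<dots> = - ln Z" using sumPs[OF finS] TS Zpos Z_def
      by (simp add: sum_negf sum_distrib_right[symmetric] Int_absorb1)
    finally show ?thesis using cond unfolding rel_entropy_def by simp
  qed
  have minM: "is_minimizer n N C M Ps"
    unfolding is_minimizer_def S_def[symmetric] using PsC DPs lower by auto
  have ex: "is_minimizer n N C MRB Ps"
    unfolding is_minimizer_def S_def[symmetric]
  proof (intro conjI ballI PsC)
    fix P' assume P': "P' \<in> C"
    have "rel_entropy S Ps M \<le> rel_entropy S P' M" using DPs lower P' by simp
    thus "rel_entropy S Ps MRB \<le> rel_entropy S P' MRB" unfolding transfer[OF PsC] transfer[OF P']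
      by (cases "rel_entropy S P' M"; cases "rel_entropy S Ps M") auto
  qed
  have all: "is_minimizer n N C M P" if P: "is_minimizer n N C MRB P" for P
    unfolding is_minimizer_def S_def[symmetric]
  proof (intro conjI ballI)
    show PC: "P \<in> C" using P unfolding is_minimizer_def by auto
    fix P' assume P': "P' \<in> C"
    have "rel_entropy S P MRB \<le> rel_entropy S P' MRB" using P P' unfolding is_minimizer_def S_def by auto
    thus "rel_entropy S P M \<le> rel_entropy S P' M" unfolding transfer[OF PC] transfer[OF P']
      by (cases "rel_entropy S P' M"; cases "rel_entropy S P M") auto
  qed
  show ?thesis unfolding Let_def MRB_def[symmetric] M_def[symmetric] C_def[symmetric]
    using ex all by blast
qed

end
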